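(* Let $\mathbf X$ be a random variable with values in $\mathcal X$ and density $p(\mathbf x)$, and let $\mathcal A$ be a finite set. For Q-functions $Q_0,Q_1:\mathcal X\times\mathcal A\to(0,\infty)$ and a real number $\gamma\notin\{0,-1\}$ define $$H_\gamma(Q_0,Q_1)=-\frac1\gamma\,\mathbb E\Bigg[\frac{\sum_{a\in\mathcal A}Q_0(\mathbf X,a)\,Q_1(\mathbf X,a)^{\gamma}}{\big\{\sum_{a\in\mathcal A}Q_1(\mathbf X,a)^{1+\gamma}\big\}^{\frac{\gamma}{1+\gamma}}}\Bigg],\qquad D_\gamma(Q_0,Q_1)=H_\gamma(Q_0,Q_1)-H_\gamma(Q_0,Q_0),$$ assuming all these expectations are finite. Then $D_\gamma(Q_0,Q_1)\ge 0$, with equality if and only if $Q_0\sim Q_1$.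
   Context: A Q-function is a measurable function $Q:\mathcal X\times\mathcal A\to(0,\infty)$. Policy equivalence: $Q_0\sim Q_1$ means there exists a function $\eta:\mathcal X\to(0,\infty)$ such that $Q_1(\mathbf x,a)=\eta(\mathbf x)Q_0(\mathbf x,a)$ for all $a\in\mathcal A$ and (almost) every $\mathbf x\in\mathcal X$, where "almost every" is with respect to the distribution of $\mathbf X$. $\mathbb E$ is expectation with respect to $\mathbf X$. *)

theory Defs
  imports "HOL-Probability.Probability"
begin

text \<open>The distribution of the random variable X on the state space is modelled by a
probability measure P on the type 'x; expectations over X are Lebesgue integrals
w.r.t. P. The finite action set is a finite type 'a.\<close>

definition Q_function :: "'x measure \<Rightarrow> ('x \<Rightarrow> 'a \<Rightarrow> real) \<Rightarrow> bool" where
  "Q_function P Q \<longleftrightarrow> (\<forall>a. (\<lambda>x. Q x a) \<in> borel_measurable P) \<and> (\<forall>x a. Q x a > 0)"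

definition policy_equiv :: "'x measure \<Rightarrow> ('x \<Rightarrow> 'a \<Rightarrow> real) \<Rightarrow> ('x \<Rightarrow> 'a \<Rightarrow> real) \<Rightarrow> bool" where
  "policy_equiv P Q0 Q1 \<longleftrightarrow>
     (\<exists>\<eta> :: 'x \<Rightarrow> real. (\<forall>x. \<eta> x > 0) \<and> (AE x in P. \<forall>a. Q1 x a = \<eta> x * Q0 x a))"

definition H_integrand :: "real \<Rightarrow> ('x \<Rightarrow> 'a::finite \<Rightarrow> real) \<Rightarrow> ('x \<Rightarrow> 'a \<Rightarrow> real) \<Rightarrow> 'x \<Rightarrow> real" where
  "H_integrand \<gamma> Q0 Q1 x =
     (\<Sum>a\<in>UNIV. Q0 x a * Q1 x a powr \<gamma>) / ((\<Sum>a\<in>UNIV. Q1 x a powr (1 + \<gamma>)) powr (\<gamma> / (1 + \<gamma>)))"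

definition H_gamma :: "'x measure \<Rightarrow> real \<Rightarrow> ('x \<Rightarrow> 'a::finite \<Rightarrow> real) \<Rightarrow> ('x \<Rightarrow> 'a \<Rightarrow> real) \<Rightarrow> real" where
  "H_gamma P \<gamma> Q0 Q1 = - (1 / \<gamma>) * (\<integral>x. H_integrand \<gamma> Q0 Q1 x \<partial>P)"

definition D_gamma :: "'x measure \<Rightarrow> real \<Rightarrow> ('x \<Rightarrow> 'a::finite \<Rightarrow> real) \<Rightarrow> ('x \<Rightarrow> 'a \<Rightarrow> real) \<Rightarrow> real" where
  "D_gamma P \<gamma> Q0 Q1 = H_gamma P \<gamma> Q0 Q1 - H_gamma P \<gamma> Q0 Q0"

end

theory Submission imports Defs begin

lemma sgn_aux:
  fixes z t \<alpha> :: real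
  assumes z: "z > 0" "(z - 1) * (t - 1) > 0" and al: "\<alpha> \<noteq> 1"
  shows "(1-\<alpha>)*(z powr (\<alpha>-1) - 1) * (t-1) < 0"
proof (cases "z > 1")
  case True
  then have t1: "t > 1" using z(2) by (auto simp: zero_less_mult_iff)
  show ?thesis
  proof (cases "\<alpha> < 1")
    case True
    have "z powr (\<alpha>-1) < z powr 0" using \<open>z>1\<close> True by (intro powr_less_mono) auto
    then have "z powr (\<alpha>-1) - 1 < 0" using z by simp
    moreover have "(1-\<alpha>)*(t-1) > 0" using True t1 by simp
    ultimately show ?thesis by (metis mult.commute mult.left_commute mult_neg_pos)
  next
    case False
    have "z powr 0 < z powr (\<alpha>-1)" using \<open>z>1\<close> False al by (intro powr_less_mono) auto
    then have "z powr (\<alpha>-1) - 1 > 0" using z by simp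
    moreover have "(1-\<alpha>)*(t-1) < 0" using False al t1 by (simp add: mult_neg_pos)
    ultimately show ?thesis by (metis mult.commute mult.left_commute mult_pos_neg)
  qed
next
  case False
  then have z1: "z < 1" using z by (cases "z = 1") auto
  then have t1: "t < 1" using z(2) by (auto simp: zero_less_mult_iff)
  show ?thesis
  proof (cases "\<alpha> < 1")
    case True
    have "z powr 0 < z powr (\<alpha>-1)" using z1 z True by (intro powr_less_mono') auto
    then have "z powr (\<alpha>-1) - 1 > 0" using z by simp
    moreover have "(1-\<alpha>)*(t-1) < 0" using True t1 by (simp add: mult_pos_neg)
    ultimately show ?thesis by (metis mult.commute mult.left_commute mult_pos_neg)
  next
    case False
    have "z powr (\<alpha>-1) < z powr 0" using z1 z False al by (intro powr_less_mono') auto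
    then have "z powr (\<alpha>-1) - 1 < 0" using z by simp
    moreover have "(1-\<alpha>)*(t-1) > 0" using False al t1 by (simp add: mult_neg_neg)
    ultimately show ?thesis by (metis mult.commute mult.left_commute mult_neg_pos)
  qed
qed
lemma bern_strict:
  fixes t \<alpha> :: real
  assumes t: "t > 0" "t \<noteq> 1" and al: "\<alpha> \<noteq> 0" "\<alpha> \<noteq> 1"
  shows "\<alpha>*(1-\<alpha>)*(t powr \<alpha> - 1 - \<alpha>*(t-1)) < 0"
proof -
  define h where "h = (\<lambda>s::real. s powr \<alpha> - 1 - \<alpha>*(s-1))"
  define h' where "h' = (\<lambda>s::real. \<alpha> * (s powr (\<alpha>-1) - 1))"
  have D: "DERIV h s :> h' s" if "s > 0" for s
    unfolding h_def h'_def using that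
    by (auto intro!: derivative_eq_intros simp: algebra_simps)
  have h1: "h 1 = 0" by (simp add: h_def)
  have key: "\<alpha>*(1-\<alpha>)*(h' z * (t - 1)) < 0" if z: "z > 0" "(z - 1) * (t - 1) > 0" for z
  proof -
    have a2: "\<alpha>*\<alpha> > 0" using al(1) by (metis not_real_square_gt_zero)
    have "(1-\<alpha>)*(z powr (\<alpha>-1) - 1) * (t-1) < 0" using sgn_aux[OF z al(2)] .
    then have "(\<alpha>*\<alpha>) * ((1-\<alpha>)*(z powr (\<alpha>-1) - 1) * (t-1)) < 0"
      using a2 by (simp add: mult_pos_neg)
    then show ?thesis unfolding h'_def by (simp add: algebra_simps)
  qed
  have "\<exists>z. z > 0 \<and> (z - 1) * (t - 1) > 0 \<and> h t - h 1 = (t - 1) * h' z"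
  proof (cases "t < 1")
    case True
    obtain z where "t < z" "z < 1" "h 1 - h t = (1 - t) * h' z"
      using MVT2[of t 1 h h'] True t D by force
    moreover have "(z - 1) * (t - 1) > 0" using \<open>t < z\<close> \<open>z < 1\<close> by (intro mult_neg_neg) auto
    ultimately show ?thesis using t(1) by (intro exI[of _ z]) (auto simp: algebra_simps)
  next
    case False
    then have "t > 1" using t by simp
    obtain z where "1 < z" "z < t" "h t - h 1 = (t - 1) * h' z"
      using MVT2[of 1 t h h'] \<open>t>1\<close> D by force
    then show ?thesis by (intro exI[of _ z]) auto
  qed
  then obtain z where "z > 0" "(z - 1) * (t - 1) > 0" "h t = (t - 1) * h' z" using h1 by auto
  then have "t powr \<alpha> - 1 - \<alpha>*(t-1) = h' z * (t-1)" unfolding h_def by (simp add: mult.commute)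
  with key[of z] \<open>z > 0\<close> \<open>(z - 1) * (t - 1) > 0\<close> show ?thesis by simp
qed


lemma young_gen:
  fixes a b \<alpha> :: real
  assumes ab: "a > 0" "b > 0" and al: "\<alpha> \<noteq> 0" "\<alpha> \<noteq> 1"
  shows "\<alpha>*(1-\<alpha>)*(a powr \<alpha> * b powr (1-\<alpha>) - \<alpha>*a - (1-\<alpha>)*b) \<le> 0"
    and "a \<noteq> b \<Longrightarrow> \<alpha>*(1-\<alpha>)*(a powr \<alpha> * b powr (1-\<alpha>) - \<alpha>*a - (1-\<alpha>)*b) < 0"
proof -
  define t where "t = a / b"
  have t0: "t > 0" using ab by (simp add: t_def)
  have eq: "b * (t powr \<alpha> - 1 - \<alpha>*(t-1)) = a powr \<alpha> * b powr (1-\<alpha>) - \<alpha>*a - (1-\<alpha>)*b"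
  proof -
    have "b * t powr \<alpha> = a powr \<alpha> * b powr (1-\<alpha>)"
      using ab by (simp add: t_def powr_divide powr_diff)
    moreover have "b * (\<alpha>*(t-1)) = \<alpha>*a - \<alpha>*b"
    proof -
      have bt: "b * t = a" using ab by (simp add: t_def)
      have "b * (\<alpha>*(t-1)) = \<alpha>*(b*t) - \<alpha>*b" by (simp add: algebra_simps)
      then show ?thesis by (simp only: bt)
    qed
    moreover have "b*(t powr \<alpha> - 1 - \<alpha>*(t-1)) = b*t powr \<alpha> - b - b*(\<alpha>*(t-1))"
      by (simp add: right_diff_distrib)
    moreover have "(1-\<alpha>)*b = b - \<alpha>*b" by (simp add: left_diff_distrib)
    ultimately show ?thesis by linarith
  qed
  have strict: "\<alpha>*(1-\<alpha>)*(a powr \<alpha> * b powr (1-\<alpha>) - \<alpha>*a - (1-\<alpha>)*b) < 0" if "a \<noteq> b"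
  proof -
    have "t \<noteq> 1" using that ab by (simp add: t_def)
    from bern_strict[OF t0 this al] have "b * (\<alpha>*(1-\<alpha>)*(t powr \<alpha> - 1 - \<alpha>*(t-1))) < 0"
      using ab by (simp add: mult_pos_neg)
    then show ?thesis by (metis eq mult.left_commute)
  qed
  then show "a \<noteq> b \<Longrightarrow> \<alpha>*(1-\<alpha>)*(a powr \<alpha> * b powr (1-\<alpha>) - \<alpha>*a - (1-\<alpha>)*b) < 0" .
  show "\<alpha>*(1-\<alpha>)*(a powr \<alpha> * b powr (1-\<alpha>) - \<alpha>*a - (1-\<alpha>)*b) \<le> 0"
    using strict ab by (cases "a = b") (auto simp: powr_add[symmetric] algebra_simps)
qed


definition hI :: "real \<Rightarrow> ('a::finite \<Rightarrow> real) \<Rightarrow> ('a \<Rightarrow> real) \<Rightarrow> real" where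
  "hI \<gamma> u v = (\<Sum>a\<in>UNIV. u a * v a powr \<gamma>) / ((\<Sum>a\<in>UNIV. v a powr (1+\<gamma>)) powr (\<gamma>/(1+\<gamma>)))"

lemma H_hI: "H_integrand \<gamma> Q0 Q1 x = hI \<gamma> (Q0 x) (Q1 x)"
  by (simp add: H_integrand_def hI_def)

lemma sum_pos_powr:
  fixes u :: "'a::finite \<Rightarrow> real"
  assumes "\<And>a. u a > 0"
  shows "(\<Sum>a\<in>UNIV. u a powr p) > 0"
proof (rule sum_pos)
  fix i show "0 < u i powr p" using assms[of i] by simp
qed auto

lemma hI_self:
  fixes u :: "'a::finite \<Rightarrow> real"
  assumes u: "\<And>a. u a > 0" and g: "\<gamma> \<noteq> -1"
  shows "hI \<gamma> u u = (\<Sum>a\<in>UNIV. u a powr (1+\<gamma>)) powr (1/(1+\<gamma>))"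
proof -
  have un: "\<And>a. u a \<noteq> 0" "\<And>a. \<bar>u a\<bar> = u a" "\<And>a. u a \<ge> 0" using u by (metis less_irrefl, metis abs_of_pos, metis less_imp_le)
  define A where "A = (\<Sum>a\<in>UNIV. u a powr (1+\<gamma>))"
  have A0: "A > 0" unfolding A_def using sum_pos_powr[OF u] .
  have p0: "1 + \<gamma> \<noteq> 0" using g by linarith
  have "(\<Sum>a\<in>UNIV. u a * u a powr \<gamma>) = A"
    unfolding A_def using u by (intro sum.cong refl) (simp add: powr_add un)
  then have "hI \<gamma> u u = A / A powr (\<gamma>/(1+\<gamma>))" by (simp add: hI_def A_def)
  also have "\<dots> = A powr (1 - \<gamma>/(1+\<gamma>))" using A0 by (simp add: powr_diff)
  also have "1 - \<gamma>/(1+\<gamma>) = 1/(1+\<gamma>)" using p0 by (simp add: field_simps)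
  finally show ?thesis by (simp add: A_def)
qed

lemma hI_scale:
  fixes u :: "'a::finite \<Rightarrow> real"
  assumes u: "\<And>a. u a > 0" and c: "c > 0" and g: "\<gamma> \<noteq> -1"
  shows "hI \<gamma> u (\<lambda>a. c * u a) = hI \<gamma> u u"
proof -
  have un: "\<And>a. u a \<noteq> 0" "\<And>a. \<bar>u a\<bar> = u a" "\<And>a. u a \<ge> 0" using u by (metis less_irrefl, metis abs_of_pos, metis less_imp_le)
  have p0: "1 + \<gamma> \<noteq> 0" using g by linarith
  define A where "A = (\<Sum>a\<in>UNIV. u a powr (1+\<gamma>))"
  define S where "S = (\<Sum>a\<in>UNIV. u a * u a powr \<gamma>)"
  have A0: "A > 0" unfolding A_def using sum_pos_powr[OF u] .
  have cg: "c powr \<gamma> > 0" using c by simp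
  have "(\<Sum>a\<in>UNIV. u a * (c * u a) powr \<gamma>) = c powr \<gamma> * S"
    unfolding S_def sum_distrib_left using u c by (intro sum.cong refl) (simp add: powr_mult un)
  moreover have "(\<Sum>a\<in>UNIV. (c * u a) powr (1+\<gamma>)) = c powr (1+\<gamma>) * A"
    unfolding A_def sum_distrib_left using u c by (intro sum.cong refl) (simp add: powr_mult un)
  moreover have "(c powr (1+\<gamma>) * A) powr (\<gamma>/(1+\<gamma>)) = c powr \<gamma> * A powr (\<gamma>/(1+\<gamma>))"
    using c A0 p0 by (simp add: powr_mult powr_powr)
  ultimately have "hI \<gamma> u (\<lambda>a. c * u a) = (c powr \<gamma> * S) / (c powr \<gamma> * A powr (\<gamma>/(1+\<gamma>)))"
    by (simp add: hI_def)
  also have "\<dots> = S / A powr (\<gamma>/(1+\<gamma>))" using cg by simp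
  finally show ?thesis by (simp add: hI_def S_def A_def)
qed

lemma hI_ineq:
  fixes u v :: "'a::finite \<Rightarrow> real"
  assumes u: "\<And>a. u a > 0" and v: "\<And>a. v a > 0" and g0: "\<gamma> \<noteq> 0" and g1: "\<gamma> \<noteq> -1"
  shows "\<gamma> * (hI \<gamma> u v - hI \<gamma> u u) \<le> 0"
    and "\<gamma> * (hI \<gamma> u v - hI \<gamma> u u) = 0 \<Longrightarrow>
       \<forall>a. v a = ((\<Sum>a\<in>UNIV. v a powr (1+\<gamma>)) / (\<Sum>a\<in>UNIV. u a powr (1+\<gamma>))) powr (1/(1+\<gamma>)) * u a"
proof -
  have un: "\<And>a. u a \<noteq> 0" "\<And>a. \<bar>u a\<bar> = u a" "\<And>a. u a \<ge> 0" using u by (metis less_irrefl, metis abs_of_pos, metis less_imp_le)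
  have vn: "\<And>a. v a \<noteq> 0" "\<And>a. \<bar>v a\<bar> = v a" "\<And>a. v a \<ge> 0" using v by (metis less_irrefl, metis abs_of_pos, metis less_imp_le)
  define p where "p = 1 + \<gamma>"
  have p0: "p \<noteq> 0" using g1 unfolding p_def by linarith
  define A where "A = (\<Sum>a\<in>UNIV. u a powr p)"
  define B where "B = (\<Sum>a\<in>UNIV. v a powr p)"
  have A0: "A > 0" unfolding A_def using sum_pos_powr[OF u] .
  have B0: "B > 0" unfolding B_def using sum_pos_powr[OF v] .
  define \<alpha> where "\<alpha> = 1 / p"
  have al0: "\<alpha> \<noteq> 0" using p0 by (simp add: \<alpha>_def)
  have al1: "\<alpha> \<noteq> 1" using g0 p0 by (simp add: \<alpha>_def p_def)
  have al1': "1 - \<alpha> = \<gamma> / p" using p0 by (simp add: \<alpha>_def p_def field_simps)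
  define a where "a = (\<lambda>i. u i powr p / A)"
  define b where "b = (\<lambda>i. v i powr p / B)"
  have apos: "a i > 0" for i using u A0 by (simp add: a_def un)
  have bpos: "b i > 0" for i using v B0 by (simp add: b_def vn)
  define S where "S = (\<Sum>i\<in>UNIV. u i * v i powr \<gamma>)"
  define T where "T = (\<lambda>i. a i powr \<alpha> * b i powr (1-\<alpha>))"
  have Ti: "T i = (u i * v i powr \<gamma>) / (A powr \<alpha> * B powr (\<gamma>/p))" for i
  proof -
    have "a i powr \<alpha> = u i / A powr \<alpha>"
      using u[of i] A0 p0 by (simp add: a_def \<alpha>_def powr_divide powr_powr)
    moreover have "b i powr (1-\<alpha>) = v i powr \<gamma> / B powr (\<gamma>/p)"
      using v[of i] B0 p0 by (simp add: b_def al1' powr_divide powr_powr)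
    ultimately show ?thesis by (simp add: T_def)
  qed
  have sumT: "(\<Sum>i\<in>UNIV. T i) = S / (A powr \<alpha> * B powr (\<gamma>/p))"
    unfolding Ti S_def by (simp add: sum_divide_distrib)
  have suma: "(\<Sum>i\<in>UNIV. a i) = 1" unfolding a_def
    using A0 by (simp add: sum_divide_distrib[symmetric] A_def)
  have sumb: "(\<Sum>i\<in>UNIV. b i) = 1" unfolding b_def
    using B0 by (simp add: sum_divide_distrib[symmetric] B_def)
  define Y where "Y = (\<lambda>i. \<alpha>*(1-\<alpha>)*(T i - \<alpha>*a i - (1-\<alpha>)*b i))"
  have Yle: "Y i \<le> 0" for i unfolding Y_def T_def by (rule young_gen(1)[OF apos bpos al0 al1])
  have sumY: "(\<Sum>i\<in>UNIV. Y i) = \<alpha>*(1-\<alpha>)*((\<Sum>i\<in>UNIV. T i) - 1)"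
  proof -
    have "(\<Sum>i\<in>UNIV. Y i) = \<alpha>*(1-\<alpha>)*((\<Sum>i\<in>UNIV. T i) - \<alpha>*(\<Sum>i\<in>UNIV. a i) - (1-\<alpha>)*(\<Sum>i\<in>UNIV. b i))"
      unfolding Y_def by (simp add: sum_distrib_left[symmetric] sum_subtractf)
    then show ?thesis using suma sumb by simp
  qed
  have aa: "\<alpha>*(1-\<alpha>) = \<gamma> / (p*p)" unfolding al1' by (simp add: \<alpha>_def)
  have hv: "hI \<gamma> u v = A powr \<alpha> * (\<Sum>i\<in>UNIV. T i)"
    using A0 by (simp add: hI_def sumT S_def B_def p_def)
  have hu: "hI \<gamma> u u = A powr \<alpha>"
    using hI_self[OF u g1] by (simp add: A_def \<alpha>_def p_def)
  have diff: "\<gamma> * (hI \<gamma> u v - hI \<gamma> u u) = A powr \<alpha> * (p*p) * (\<Sum>i\<in>UNIV. Y i)"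
  proof -
    have aa2: "\<gamma> = \<alpha>*(1-\<alpha>)*(p*p)" using aa p0 by simp
    have "\<gamma> * (hI \<gamma> u v - hI \<gamma> u u) = \<gamma> * (A powr \<alpha> * ((\<Sum>i\<in>UNIV. T i) - 1))"
      by (simp add: hv hu algebra_simps)
    also have "\<dots> = A powr \<alpha> * (p*p) * (\<alpha>*(1-\<alpha>)*((\<Sum>i\<in>UNIV. T i) - 1))"
      by (subst aa2) (simp add: algebra_simps)
    finally show ?thesis by (simp add: sumY)
  qed
  have sY: "(\<Sum>i\<in>UNIV. Y i) \<le> 0" using Yle by (simp add: sum_nonpos)
  have pp: "p*p > 0" using p0 by (metis not_real_square_gt_zero)
  have Ap: "A powr \<alpha> * (p*p) > 0" using A0 pp by simp
  show "\<gamma> * (hI \<gamma> u v - hI \<gamma> u u) \<le> 0"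
    unfolding diff using Ap sY by (simp add: mult_nonneg_nonpos)
  assume "\<gamma> * (hI \<gamma> u v - hI \<gamma> u u) = 0"
  then have "(\<Sum>i\<in>UNIV. Y i) = 0" unfolding diff using A0 p0 by simp
  then have "(\<Sum>i\<in>UNIV. - Y i) = 0" by (simp add: sum_negf)
  then have Y0: "\<forall>i. - Y i = 0" using Yle by (subst (asm) sum_nonneg_eq_0_iff) auto
  have abeq: "a i = b i" for i
  proof (rule ccontr)
    assume "a i \<noteq> b i"
    from young_gen(2)[OF apos bpos al0 al1 this] Y0[rule_format, of i] show False unfolding Y_def T_def by linarith
  qed
  show "\<forall>i. v i = ((\<Sum>a\<in>UNIV. v a powr (1+\<gamma>)) / (\<Sum>a\<in>UNIV. u a powr (1+\<gamma>))) powr (1/(1+\<gamma>)) * u i"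
  proof
    fix i
    have "v i powr p = (B / A) * u i powr p"
      using abeq[of i] A0 B0 by (simp add: a_def b_def field_simps)
    then have "(v i powr p) powr \<alpha> = ((B / A) * u i powr p) powr \<alpha>" by simp
    moreover have "(v i powr p) powr \<alpha> = v i"
      using v[of i] p0 by (simp add: powr_powr \<alpha>_def)
    moreover have "((B / A) * u i powr p) powr \<alpha> = (B/A) powr \<alpha> * (u i powr p) powr \<alpha>"
      using u[of i] A0 B0 by (intro powr_mult)
    moreover have "(u i powr p) powr \<alpha> = u i"
      using u[of i] p0 by (simp add: powr_powr \<alpha>_def)
    ultimately have "v i = (B/A) powr \<alpha> * u i" by simp
    then show "v i = ((\<Sum>a\<in>UNIV. v a powr (1+\<gamma>)) / (\<Sum>a\<in>UNIV. u a powr (1+\<gamma>))) powr (1/(1+\<gamma>)) * u i"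
      by (simp add: A_def B_def \<alpha>_def p_def)
  qed
qed


theorem theorem1:
  fixes P :: "'x measure" and Q0 Q1 :: "'x \<Rightarrow> 'a::finite \<Rightarrow> real" and \<gamma> :: real
  assumes "prob_space P"
    and "Q_function P Q0" and "Q_function P Q1"
    and "\<gamma> \<noteq> 0" and "\<gamma> \<noteq> -1"
    and "integrable P (H_integrand \<gamma> Q0 Q1)"
    and "integrable P (H_integrand \<gamma> Q0 Q0)"
  shows "D_gamma P \<gamma> Q0 Q1 \<ge> 0 \<and> (D_gamma P \<gamma> Q0 Q1 = 0 \<longleftrightarrow> policy_equiv P Q0 Q1)"
proof -
  have q0: "\<And>x a. Q0 x a > 0" and q1: "\<And>x a. Q1 x a > 0"
    using assms(2,3) by (auto simp: Q_function_def)
  define F where "F = H_integrand \<gamma> Q0 Q1"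
  define G where "G = H_integrand \<gamma> Q0 Q0"
  define R where "R = (\<lambda>x. \<gamma> * G x - \<gamma> * F x)"
  have iF: "integrable P F" and iG: "integrable P G" using assms(6,7) by (simp_all add: F_def G_def)
  have iR: "integrable P R" unfolding R_def
    by (intro Bochner_Integration.integrable_diff integrable_mult_right iG iF)
  have Rnn: "R x \<ge> 0" for x
    using hI_ineq(1)[where u="Q0 x" and v="Q1 x", OF q0 q1 assms(4,5)]
    unfolding R_def F_def G_def H_hI right_diff_distrib by linarith
  have intR: "(\<integral>x. R x \<partial>P) = \<gamma> * (\<integral>x. G x \<partial>P) - \<gamma> * (\<integral>x. F x \<partial>P)"
    unfolding R_def using iF iG by simp
  have gg: "\<gamma> * \<gamma> > 0" using assms(4) by (metis not_real_square_gt_zero)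
  have D: "D_gamma P \<gamma> Q0 Q1 = (\<integral>x. R x \<partial>P) / (\<gamma> * \<gamma>)"
  proof -
    have ab: "- (1 / \<gamma>) * a - - (1 / \<gamma>) * b = (\<gamma> * b - \<gamma> * a) / (\<gamma> * \<gamma>)" for a b :: real
      using assms(4) by (simp add: field_simps)
    show ?thesis unfolding intR D_gamma_def H_gamma_def F_def[symmetric] G_def[symmetric] by (rule ab)
  qed
  have I0: "(\<integral>x. R x \<partial>P) \<ge> 0" by (rule integral_nonneg_AE) (simp add: Rnn)
  have D0: "D_gamma P \<gamma> Q0 Q1 \<ge> 0" unfolding D using I0 gg by simp
  have "D_gamma P \<gamma> Q0 Q1 = 0 \<longleftrightarrow> (\<integral>x. R x \<partial>P) = 0" unfolding D using gg assms(4) by simp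
  also have "\<dots> \<longleftrightarrow> (AE x in P. R x = 0)"
    by (rule integral_nonneg_eq_0_iff_AE[OF iR]) (simp add: Rnn)
  also have "\<dots> \<longleftrightarrow> policy_equiv P Q0 Q1"
  proof
    assume ae: "AE x in P. R x = 0"
    define \<eta> where "\<eta> = (\<lambda>x. ((\<Sum>a\<in>UNIV. Q1 x a powr (1+\<gamma>)) / (\<Sum>a\<in>UNIV. Q0 x a powr (1+\<gamma>))) powr (1/(1+\<gamma>)))"
    have \<eta>pos: "\<eta> x > 0" for x
      using sum_pos_powr[where u="Q0 x" and p="1+\<gamma>", OF q0] sum_pos_powr[where u="Q1 x" and p="1+\<gamma>", OF q1] by (simp add: \<eta>_def)
    have "AE x in P. \<forall>a. Q1 x a = \<eta> x * Q0 x a"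
      using ae
    proof eventually_elim
      case (elim x)
      then have "\<gamma> * G x - \<gamma> * F x = 0" by (simp only: R_def)
      then have "\<gamma> * (hI \<gamma> (Q0 x) (Q1 x) - hI \<gamma> (Q0 x) (Q0 x)) = 0"
        unfolding F_def G_def H_hI right_diff_distrib by linarith
      from hI_ineq(2)[where u="Q0 x" and v="Q1 x", OF q0 q1 assms(4,5) this] show ?case unfolding \<eta>_def .
    qed
    then show "policy_equiv P Q0 Q1" unfolding policy_equiv_def using \<eta>pos by (intro exI[of _ \<eta>] conjI allI)
  next
    assume "policy_equiv P Q0 Q1"
    then obtain \<eta> :: "'x \<Rightarrow> real" where \<eta>pos: "\<forall>x. \<eta> x > 0"
      and ae: "AE x in P. \<forall>a. Q1 x a = \<eta> x * Q0 x a" unfolding policy_equiv_def by blast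
    show "AE x in P. R x = 0"
      using ae
    proof eventually_elim
      case (elim x)
      then have "Q1 x = (\<lambda>a. \<eta> x * Q0 x a)" by auto
      then have "hI \<gamma> (Q0 x) (Q1 x) = hI \<gamma> (Q0 x) (Q0 x)"
        using hI_scale[where u="Q0 x" and c="\<eta> x", OF q0 _ assms(5)] \<eta>pos by simp
      then show ?case by (simp add: R_def F_def G_def H_hI)
    qed
  qed
  finally show ?thesis using D0 by blast
qed

end
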